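(* Assume $\gamma_0$ is unimodal (and symmetric about $0$) with $\sup_u|\frac{d}{du}\log\gamma_0(u)|\le\Lambda$ a.e. for some $\Lambda>0$. Then there is a constant $C>0$ depending only on $\gamma_0$ such that for all $x\in\mathbb{R}$, $w\in(0,1]$ and $c\in\mathbb{R}$, $$|\zeta(x;\theta)-x|\le C\bigl(1+\sqrt{|c|+\log(1/w)}\bigr).$$
   Context: Let $\phi$ be the standard normal density and $\gamma_0$ a probability density on $\mathbb{R}$. For $\theta=(w,c)$, $w\in(0,1]$, $c\in\mathbb{R}$, let $g(x;c)=\int\phi(x-\mu)\gamma_0(\mu-c)\,d\mu$, $m(x;\theta)=(1-w)\phi(x)+wg(x;c)$, and $\zeta(x;\theta)=x+\frac{d}{dx}\log m(x;\theta)$ (the posterior mean of $\mu$ given $X=x$ under $X\mid\mu\sim N(\mu,1)$ and prior $(1-w)\delta_0+w\gamma_0(\cdot-c)$). *)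

theory Defs
  imports "HOL-Probability.Probability"
begin

definition gconv :: "(real \<Rightarrow> real) \<Rightarrow> real \<Rightarrow> real \<Rightarrow> real" where
  "gconv \<gamma>0 c x = (LINT \<mu>|lborel. std_normal_density (x - \<mu>) * \<gamma>0 (\<mu> - c))"

definition marg :: "(real \<Rightarrow> real) \<Rightarrow> real \<Rightarrow> real \<Rightarrow> real \<Rightarrow> real" where
  "marg \<gamma>0 w c x = (1 - w) * std_normal_density x + w * gconv \<gamma>0 c x"

definition zeta :: "(real \<Rightarrow> real) \<Rightarrow> real \<Rightarrow> real \<Rightarrow> real \<Rightarrow> real" where
  "zeta \<gamma>0 w c x = x + deriv (\<lambda>y. ln (marg \<gamma>0 w c y)) x"

end

theory Submission
  imports Defs
begin

lemma phi_eq: "std_normal_density y = (1 / sqrt (2 * pi)) * exp (- y\<^sup>2 / 2)"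
  by (rule std_normal_density_def)

lemma gauss_deriv_k: "((\<lambda>y. k * exp (- y\<^sup>2 / 2)) has_real_derivative - y * (k * exp (- y\<^sup>2 / 2))) (at y)"
proof -
  have d: "((\<lambda>y. k * exp (- y\<^sup>2 / 2)) has_real_derivative k * (exp (- y\<^sup>2 / 2) * (- (2 * y) / 2))) (at y)"
    by (auto intro!: derivative_eq_intros)
  have e: "k * (exp (- y\<^sup>2 / 2) * (- (2 * y) / 2)) = - y * (k * exp (- y\<^sup>2 / 2))"
    by (simp add: algebra_simps)
  show ?thesis using d unfolding e .
qed

lemma phi_deriv: "(std_normal_density has_real_derivative (- y * std_normal_density y)) (at y)"
proof -
  have f: "std_normal_density = (\<lambda>y. (1 / sqrt (2 * pi)) * exp (- y\<^sup>2 / 2))"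
    by (rule ext) (rule phi_eq)
  show ?thesis unfolding f by (rule gauss_deriv_k)
qed

lemma abs_le_exp_sq: "\<bar>y::real\<bar> \<le> exp (y\<^sup>2 / 2)"
proof -
  have "0 \<le> (\<bar>y\<bar> - 1)\<^sup>2" by simp
  moreover have "(\<bar>y\<bar> - 1)\<^sup>2 = y\<^sup>2 - 2*\<bar>y\<bar> + 1" by (simp add: power2_eq_square algebra_simps)
  ultimately have "\<bar>y\<bar> \<le> 1 + y\<^sup>2/2" by linarith
  also have "\<dots> \<le> exp (y\<^sup>2/2)" by (rule exp_ge_add_one_self)
  finally show ?thesis .
qed

lemma inv_sqrt2pi_le1: "1 / sqrt (2*pi) \<le> 1"
proof -
  have "1 \<le> sqrt (2*pi)" using pi_gt3 by simp
  then show ?thesis by (simp add: divide_le_eq)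
qed

lemma phi_le1: "std_normal_density y \<le> 1"
proof -
  have "(1 / sqrt (2 * pi)) * exp (- y\<^sup>2 / 2) \<le> 1 * 1"
    by (rule mult_mono) (auto simp: inv_sqrt2pi_le1)
  then show ?thesis by (metis phi_eq mult_1)
qed

lemma absphi_le1: "\<bar>y\<bar> * std_normal_density y \<le> 1"
proof -
  have "\<bar>y\<bar> * exp (- y\<^sup>2 / 2) \<le> exp (y\<^sup>2/2) * exp (- y\<^sup>2 / 2)"
    by (intro mult_right_mono abs_le_exp_sq) simp
  also have "\<dots> = 1" by (simp add: exp_add[symmetric])
  finally have b: "\<bar>y\<bar> * exp (- y\<^sup>2 / 2) \<le> 1" .
  have "(1 / sqrt (2*pi)) * (\<bar>y\<bar> * exp (- y\<^sup>2 / 2)) \<le> 1 * 1"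
    by (rule mult_mono[OF inv_sqrt2pi_le1 b]) auto
  moreover have "\<bar>y\<bar> * std_normal_density y = (1 / sqrt (2*pi)) * (\<bar>y\<bar> * exp (- y\<^sup>2 / 2))"
    by (simp only: phi_eq mult_ac)
  ultimately show ?thesis by simp
qed

lemma phi_lip: "\<bar>std_normal_density a - std_normal_density b\<bar> \<le> \<bar>a - b\<bar>"
proof -
  have main: "\<bar>std_normal_density b' - std_normal_density a'\<bar> \<le> \<bar>b' - a'\<bar>" if "a' < b'" for a' b'
  proof -
    have "\<exists>z>a'. z < b' \<and> std_normal_density b' - std_normal_density a' = (b' - a') * (- z * std_normal_density z)"
      by (rule MVT2[OF that]) (rule phi_deriv)
    then obtain z where eq: "std_normal_density b' - std_normal_density a' = (b' - a') * (- z * std_normal_density z)"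
      by blast
    have "\<bar>- z * std_normal_density z\<bar> \<le> 1" using absphi_le1[of z] by (simp add: abs_mult)
    then have "\<bar>(b' - a') * (- z * std_normal_density z)\<bar> \<le> \<bar>b' - a'\<bar> * 1"
      unfolding abs_mult by (intro mult_left_mono) auto
    then show ?thesis using eq by simp
  qed
  show ?thesis
  proof (cases a b rule: linorder_cases)
    case less then show ?thesis using main[of a b] by (simp add: abs_minus_commute)
  next
    case equal then show ?thesis by simp
  next
    case greater then show ?thesis using main[of b a] by simp
  qed
qed

lemma phi_shift_deriv: "((\<lambda>y. std_normal_density (y - m)) has_real_derivative (- (x - m) * std_normal_density (x - m))) (at x)"
proof -
  have "((\<lambda>y. std_normal_density (y - m)) has_real_derivative (- (x - m) * std_normal_density (x - m)) * 1) (at x)"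
    by (rule DERIV_chain2[OF phi_deriv]) (auto intro!: derivative_eq_intros)
  then show ?thesis by simp
qed

lemma conv_integrable:
  fixes h :: "real \<Rightarrow> real"
  assumes h_int: "integrable lborel h"
  shows "integrable lborel (\<lambda>\<mu>. std_normal_density (y - \<mu>) * h \<mu>)"
proof (rule Bochner_Integration.integrable_bound[OF h_int])
  have [measurable]: "h \<in> borel_measurable borel" using borel_measurable_integrable[OF h_int] by simp
  show "(\<lambda>\<mu>. std_normal_density (y - \<mu>) * h \<mu>) \<in> borel_measurable lborel" by measurable
  show "AE \<mu> in lborel. norm (std_normal_density (y - \<mu>) * h \<mu>) \<le> norm (h \<mu>)"
  proof (rule AE_I2)
    fix \<mu>
    have "\<bar>std_normal_density (y - \<mu>)\<bar> * \<bar>h \<mu>\<bar> \<le> 1 * \<bar>h \<mu>\<bar>"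
      by (rule mult_right_mono) (auto simp: phi_le1)
    then show "norm (std_normal_density (y - \<mu>) * h \<mu>) \<le> norm (h \<mu>)" by (simp add: abs_mult)
  qed
qed

lemma conv_deriv:
  fixes h :: "real \<Rightarrow> real"
  assumes h_int: "integrable lborel h"
  shows "((\<lambda>x. LINT \<mu>|lborel. std_normal_density (x - \<mu>) * h \<mu>) has_real_derivative
           (LINT \<mu>|lborel. - (x - \<mu>) * std_normal_density (x - \<mu>) * h \<mu>)) (at x)"
proof -
  have [measurable]: "h \<in> borel_measurable borel" using borel_measurable_integrable[OF h_int] by simp
  let ?G = "\<lambda>x. LINT \<mu>|lborel. std_normal_density (x - \<mu>) * h \<mu>"
  have "((\<lambda>y. (?G y - ?G x) / (y - x)) \<longlongrightarrow> (LINT \<mu>|lborel. - (x - \<mu>) * std_normal_density (x - \<mu>) * h \<mu>)) (at x)"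
  proof (rule LIMSEQ_SEQ_conv[THEN iffD1], intro allI impI)
    fix S :: "nat \<Rightarrow> real" assume S: "(\<forall>n. S n \<noteq> x) \<and> S \<longlonglongrightarrow> x"
    define s where "s n \<mu> = (std_normal_density (S n - \<mu>) - std_normal_density (x - \<mu>)) / (S n - x) * h \<mu>" for n \<mu>
    have eq: "(?G (S n) - ?G x) / (S n - x) = integral\<^sup>L lborel (s n)" for n
    proof -
      have ne: "S n - x \<noteq> 0" using S by auto
      have "integral\<^sup>L lborel (s n) = (LINT \<mu>|lborel. (std_normal_density (S n - \<mu>) * h \<mu> - std_normal_density (x - \<mu>) * h \<mu>) / (S n - x))"
        by (rule Bochner_Integration.integral_cong) (auto simp: s_def ne divide_simps algebra_simps)
      also have "\<dots> = (?G (S n) - ?G x) / (S n - x)"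
        by (simp add: Bochner_Integration.integral_diff[OF conv_integrable[OF h_int] conv_integrable[OF h_int]])
      finally show ?thesis by simp
    qed
    have lim: "(\<lambda>n. integral\<^sup>L lborel (s n)) \<longlonglongrightarrow> (LINT \<mu>|lborel. - (x - \<mu>) * std_normal_density (x - \<mu>) * h \<mu>)"
    proof (rule integral_dominated_convergence[where w = "\<lambda>\<mu>. \<bar>h \<mu>\<bar>"])
      show "(\<lambda>\<mu>. - (x - \<mu>) * std_normal_density (x - \<mu>) * h \<mu>) \<in> borel_measurable lborel" by measurable
      show "s n \<in> borel_measurable lborel" for n unfolding s_def by measurable
      show "integrable lborel (\<lambda>\<mu>. \<bar>h \<mu>\<bar>)" using h_int by simp
      show "AE \<mu> in lborel. (\<lambda>n. s n \<mu>) \<longlonglongrightarrow> - (x - \<mu>) * std_normal_density (x - \<mu>) * h \<mu>"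
      proof (rule AE_I2)
        fix \<mu>
        have "((\<lambda>y. (std_normal_density (y - \<mu>) - std_normal_density (x - \<mu>)) / (y - x)) \<longlongrightarrow> - (x - \<mu>) * std_normal_density (x - \<mu>)) (at x)"
          using phi_shift_deriv[of \<mu> x] by (simp add: has_field_derivative_iff)
        then have "(\<lambda>n. (std_normal_density (S n - \<mu>) - std_normal_density (x - \<mu>)) / (S n - x)) \<longlonglongrightarrow> - (x - \<mu>) * std_normal_density (x - \<mu>)"
          using S by (simp add: LIMSEQ_SEQ_conv[symmetric])
        then show "(\<lambda>n. s n \<mu>) \<longlonglongrightarrow> - (x - \<mu>) * std_normal_density (x - \<mu>) * h \<mu>"
          unfolding s_def by (rule tendsto_mult_right)
      qed
      show "AE \<mu> in lborel. norm (s n \<mu>) \<le> \<bar>h \<mu>\<bar>" for n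
      proof (rule AE_I2)
        fix \<mu>
        have ne: "S n - x \<noteq> 0" using S by auto
        have "\<bar>std_normal_density (S n - \<mu>) - std_normal_density (x - \<mu>)\<bar> \<le> \<bar>S n - x\<bar>"
          using phi_lip[of "S n - \<mu>" "x - \<mu>"] by simp
        then have "\<bar>(std_normal_density (S n - \<mu>) - std_normal_density (x - \<mu>)) / (S n - x)\<bar> \<le> 1"
          using ne by (simp add: abs_divide divide_le_eq)
        then have "\<bar>(std_normal_density (S n - \<mu>) - std_normal_density (x - \<mu>)) / (S n - x)\<bar> * \<bar>h \<mu>\<bar> \<le> 1 * \<bar>h \<mu>\<bar>"
          by (rule mult_right_mono) simp
        then show "norm (s n \<mu>) \<le> \<bar>h \<mu>\<bar>" by (simp add: s_def abs_mult)
      qed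
    qed
    show "(\<lambda>n. (?G (S n) - ?G x) / (S n - x)) \<longlonglongrightarrow> (LINT \<mu>|lborel. - (x - \<mu>) * std_normal_density (x - \<mu>) * h \<mu>)"
      unfolding eq by (rule lim)
  qed
  then show ?thesis by (simp add: has_field_derivative_iff)
qed

lemma not_AE_False_lborel: "\<not> (AE x in (lborel :: real measure). False)"
proof
  assume "AE x in (lborel :: real measure). False"
  then have "ae_filter (lborel :: real measure) = bot" using trivial_limit_def by blast
  then have "emeasure (lborel :: real measure) (space lborel) = 0" by (simp add: ae_filter_eq_bot_iff)
  then show False by simp
qed

lemma pos_integral_pos:
  fixes f :: "real \<Rightarrow> real"
  assumes "integrable lborel f" "\<And>t. f t > 0"
  shows "integral\<^sup>L lborel f > 0"
proof -
  have "integral\<^sup>L lborel f \<ge> 0" using assms by (simp add: less_imp_le)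
  moreover have "integral\<^sup>L lborel f \<noteq> 0"
  proof
    assume "integral\<^sup>L lborel f = 0"
    then have "AE t in lborel. f t = 0"
      using integral_nonneg_eq_0_iff_AE[OF assms(1)] assms(2) by (simp add: less_imp_le)
    then have "AE (t::real) in lborel. False"
      by (rule AE_mp) (rule AE_I2, use assms(2) in \<open>auto simp: less_le\<close>)
    then show False using not_AE_False_lborel by blast
  qed
  ultimately show ?thesis by simp
qed

lemma int_absexp4: "integrable lborel (\<lambda>t::real. \<bar>t\<bar> * exp (- t\<^sup>2 / 4))"
proof -
  let ?f = "\<lambda>t::real. \<bar>t\<bar> * exp (- t\<^sup>2 / 4)"
  have A: "integrable lborel (\<lambda>x. (sqrt 2 * sqrt (2*pi)) * (std_normal_density x * \<bar>x\<bar> ^ 1))"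
    by (intro integrable_mult_right integrable_std_normal_moment_abs)
  have B: "(\<lambda>x. (sqrt 2 * sqrt (2*pi)) * (std_normal_density x * \<bar>x\<bar> ^ 1)) = (\<lambda>x. ?f (0 + sqrt 2 * x))"
  proof
    fix x :: real
    have sq: "(sqrt 2 * x)\<^sup>2 = 2 * x\<^sup>2" by (simp add: power_mult_distrib)
    have "sqrt (2*pi) > 0" by simp
    then show "(sqrt 2 * sqrt (2*pi)) * (std_normal_density x * \<bar>x\<bar> ^ 1) = ?f (0 + sqrt 2 * x)"
      by (simp add: phi_eq sq abs_mult)
  qed
  have "integrable lborel (\<lambda>x. ?f (0 + sqrt 2 * x))" using A unfolding B .
  then show ?thesis using lborel_integrable_real_affine_iff[of "sqrt 2" ?f 0] by simp
qed

lemma loglip_exp: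
  fixes \<gamma>0 :: "real \<Rightarrow> real"
  assumes pos: "\<And>u. \<gamma>0 u > 0"
    and loglip: "\<And>u v. \<bar>ln (\<gamma>0 u) - ln (\<gamma>0 v)\<bar> \<le> \<Lambda> * \<bar>u - v\<bar>"
  shows "\<gamma>0 a \<le> \<gamma>0 b * exp (\<Lambda> * \<bar>a - b\<bar>)"
    and "\<gamma>0 b * exp (- (\<Lambda> * \<bar>a - b\<bar>)) \<le> \<gamma>0 a"
proof -
  have l: "\<bar>ln (\<gamma>0 a) - ln (\<gamma>0 b)\<bar> \<le> \<Lambda> * \<bar>a - b\<bar>" by (rule loglip)
  have "\<gamma>0 a = exp (ln (\<gamma>0 a))" using pos[of a] by simp
  also have "\<dots> \<le> exp (ln (\<gamma>0 b) + \<Lambda> * \<bar>a - b\<bar>)" using l by simp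
  also have "\<dots> = \<gamma>0 b * exp (\<Lambda> * \<bar>a - b\<bar>)" using pos[of b] by (simp add: exp_add)
  finally show "\<gamma>0 a \<le> \<gamma>0 b * exp (\<Lambda> * \<bar>a - b\<bar>)" .
  have "\<gamma>0 b * exp (- (\<Lambda> * \<bar>a - b\<bar>)) = exp (ln (\<gamma>0 b) - \<Lambda> * \<bar>a - b\<bar>)"
    using pos[of b] by (simp add: exp_diff exp_minus field_simps)
  also have "\<dots> \<le> exp (ln (\<gamma>0 a))" using l by simp
  also have "\<dots> = \<gamma>0 a" using pos[of a] by simp
  finally show "\<gamma>0 b * exp (- (\<Lambda> * \<bar>a - b\<bar>)) \<le> \<gamma>0 a" .
qed

lemma exp_bound1: fixes L t :: real shows "exp (- t\<^sup>2 / 2 + L * \<bar>t\<bar>) \<le> exp (L\<^sup>2) * exp (- t\<^sup>2 / 4)"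
proof -
  have "0 \<le> (\<bar>t\<bar> / 2 - L)\<^sup>2" by simp
  moreover have "(\<bar>t\<bar> / 2 - L)\<^sup>2 = t\<^sup>2/4 - L * \<bar>t\<bar> + L\<^sup>2" by (simp add: power2_eq_square algebra_simps)
  ultimately have "- t\<^sup>2 / 2 + L * \<bar>t\<bar> \<le> L\<^sup>2 + (- t\<^sup>2 / 4)" by linarith
  then show ?thesis by (simp add: exp_add[symmetric])
qed

lemma absx_exp4: "\<bar>x::real\<bar> \<le> exp (x\<^sup>2 / 4)"
proof -
  have "0 \<le> (\<bar>x\<bar>/2 - 1)\<^sup>2" by simp
  moreover have "(\<bar>x\<bar>/2 - 1)\<^sup>2 = x\<^sup>2/4 - \<bar>x\<bar> + 1" by (simp add: power2_eq_square algebra_simps)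
  ultimately have "\<bar>x\<bar> \<le> 1 + x\<^sup>2/4" by linarith
  also have "\<dots> \<le> exp (x\<^sup>2/4)" by (rule exp_ge_add_one_self)
  finally show ?thesis .
qed

lemma final_bound:
  fixes x w c p G G' B K \<Lambda> M :: real
  assumes w0: "0 < w" and w1: "w \<le> 1" and p0: "0 < p" and p1: "p \<le> exp (- x\<^sup>2 / 2)"
    and G0: "0 < G" and G': "\<bar>G'\<bar> \<le> B * G" and B0: "0 \<le> B"
    and K0: "0 < K" and Glow: "K * exp (- (\<Lambda> * \<bar>x\<bar>) - \<Lambda> * \<bar>c\<bar>) \<le> G"
    and \<Lambda>0: "0 < \<Lambda>" and M: "M = max 1 \<Lambda>"
  shows "\<bar>((1 - w) * (- x * p) + w * G') / ((1 - w) * p + w * G)\<bar>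
          \<le> 4 * \<Lambda> + sqrt (8 * M) * sqrt (\<bar>c\<bar> + ln (1 / w)) + 1 / K + B"
proof -
  define L where "L = ln (1 / w)"
  define m where "m = (1 - w) * p + w * G"
  have L0: "0 \<le> L" unfolding L_def using w0 w1 by simp
  have wL: "w = exp (- L)" unfolding L_def using w0 by (simp add: ln_div)
  have wG0: "0 < w * G" using w0 G0 by simp
  have pm: "0 \<le> (1 - w) * p" using w1 p0 by simp
  have m0: "0 < m" unfolding m_def using wG0 pm by linarith
  have wGm: "w * G \<le> m" unfolding m_def using pm by linarith
  have pmm: "(1 - w) * p \<le> m" unfolding m_def using wG0 by linarith
  have split: "\<bar>((1 - w) * (- x * p) + w * G') / m\<bar> \<le> (1 - w) * p * \<bar>x\<bar> / m + \<bar>w * G'\<bar> / m"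
  proof -
    have "\<bar>((1 - w) * (- x * p) + w * G') / m\<bar> = \<bar>(1 - w) * (- x * p) + w * G'\<bar> / m"
      using m0 by (simp add: abs_divide)
    also have "\<dots> \<le> (\<bar>(1 - w) * (- x * p)\<bar> + \<bar>w * G'\<bar>) / m"
      using m0 by (intro divide_right_mono abs_triangle_ineq) simp
    also have "\<bar>(1 - w) * (- x * p)\<bar> = (1 - w) * p * \<bar>x\<bar>"
      using w1 p0 by (simp add: abs_mult)
    finally show ?thesis by (simp add: add_divide_distrib)
  qed
  have second: "\<bar>w * G'\<bar> / m \<le> B"
  proof -
    have "\<bar>w * G'\<bar> = w * \<bar>G'\<bar>" using w0 by (simp add: abs_mult)
    also have "\<dots> \<le> w * (B * G)" using G' w0 by (intro mult_left_mono) auto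
    also have "\<dots> = B * (w * G)" by simp
    also have "\<dots> \<le> B * m" using wGm B0 by (intro mult_left_mono) auto
    finally show ?thesis using m0 by (simp add: divide_le_eq)
  qed
  have s0: "0 \<le> sqrt (8 * M) * sqrt (\<bar>c\<bar> + L)" using M L0 by simp
  have first: "(1 - w) * p * \<bar>x\<bar> / m \<le> 4 * \<Lambda> + sqrt (8 * M) * sqrt (\<bar>c\<bar> + L) + 1 / K"
  proof (cases "x\<^sup>2 \<le> 16 * \<Lambda>\<^sup>2 + 8 * M * (\<bar>c\<bar> + L)")
    case True
    have "(1 - w) * p * \<bar>x\<bar> / m \<le> m * \<bar>x\<bar> / m"
      using m0 pmm by (intro divide_right_mono mult_right_mono) auto
    also have "\<dots> = \<bar>x\<bar>" using m0 by simp
    also have "\<dots> = sqrt (x\<^sup>2)" by simp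
    also have "\<dots> \<le> sqrt (16 * \<Lambda>\<^sup>2 + 8 * M * (\<bar>c\<bar> + L))" by (rule real_sqrt_le_mono[OF True])
    also have "\<dots> \<le> sqrt (16 * \<Lambda>\<^sup>2) + sqrt (8 * M * (\<bar>c\<bar> + L))"
      using M L0 by (intro sqrt_add_le_add_sqrt) auto
    also have "sqrt (16 * \<Lambda>\<^sup>2) = 4 * \<Lambda>" using \<Lambda>0
      by (simp add: real_sqrt_mult)
    also have "sqrt (8 * M * (\<bar>c\<bar> + L)) = sqrt (8 * M) * sqrt (\<bar>c\<bar> + L)"
      by (simp add: real_sqrt_mult)
    finally have "(1 - w) * p * \<bar>x\<bar> / m \<le> 4 * \<Lambda> + sqrt (8 * M) * sqrt (\<bar>c\<bar> + L)" .
    moreover have "0 < 1 / K" using K0 by simp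
    ultimately show ?thesis by linarith
  next
    case False
    have M1: "\<Lambda> \<le> M" "1 \<le> M" using M by auto
    have "\<Lambda> * \<bar>c\<bar> \<le> M * \<bar>c\<bar>" using M1 by (intro mult_right_mono) auto
    moreover have "L \<le> M * L" using mult_right_mono[OF M1(2) L0] by simp
    moreover have "0 \<le> (\<bar>x\<bar> - 4 * \<Lambda>)\<^sup>2" by (rule zero_le_power2)
    moreover have "(\<bar>x\<bar> - 4 * \<Lambda>)\<^sup>2 = x\<^sup>2 - 8 * (\<Lambda> * \<bar>x\<bar>) + 16 * \<Lambda>\<^sup>2"
      by (simp add: power2_eq_square algebra_simps)
    moreover have "8 * M * (\<bar>c\<bar> + L) = 8 * (M * \<bar>c\<bar>) + 8 * (M * L)" by (simp add: algebra_simps)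
    ultimately have ex: "L + \<Lambda> * \<bar>x\<bar> + \<Lambda> * \<bar>c\<bar> \<le> x\<^sup>2 / 4"
      using False by linarith
    have "(1 - w) * p * \<bar>x\<bar> / m \<le> p * \<bar>x\<bar> / (w * G)"
    proof -
      have "(1 - w) * (p * \<bar>x\<bar>) \<le> 1 * (p * \<bar>x\<bar>)" using w0 p0 by (intro mult_right_mono) auto
      then have "(1 - w) * p * \<bar>x\<bar> \<le> p * \<bar>x\<bar>" by (simp add: mult.assoc)
      then have "(1 - w) * p * \<bar>x\<bar> / m \<le> p * \<bar>x\<bar> / m" using m0 by (simp add: divide_right_mono)
      also have "\<dots> \<le> p * \<bar>x\<bar> / (w * G)" using wG0 wGm p0 by (intro divide_left_mono) auto
      finally show ?thesis .
    qed
    also have "\<dots> \<le> 1 / K"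
    proof -
      have "p * \<bar>x\<bar> \<le> exp (- x\<^sup>2 / 2) * exp (x\<^sup>2 / 4)"
        using p0 p1 absx_exp4[of x] by (intro mult_mono) auto
      also have "\<dots> = exp (- x\<^sup>2 / 4)" by (simp add: exp_add[symmetric])
      also have "\<dots> \<le> exp (- L - (\<Lambda> * \<bar>x\<bar>) - \<Lambda> * \<bar>c\<bar>)" using ex by simp
      also have "\<dots> = w * exp (- (\<Lambda> * \<bar>x\<bar>) - \<Lambda> * \<bar>c\<bar>)" by (simp add: wL exp_add[symmetric])
      also have "\<dots> = w * (K * exp (- (\<Lambda> * \<bar>x\<bar>) - \<Lambda> * \<bar>c\<bar>)) / K" using K0 by simp
      also have "\<dots> \<le> w * G / K" using Glow w0 K0 by (intro divide_right_mono mult_left_mono) auto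
      finally have "p * \<bar>x\<bar> \<le> w * G / K" .
      then show ?thesis using wG0 K0 by (simp add: divide_le_eq field_simps)
    qed
    finally show ?thesis using s0 \<Lambda>0 by simp
  qed
  show ?thesis using split second first unfolding m_def L_def by linarith
qed

lemma phi_le_exp: "std_normal_density t \<le> exp (- t\<^sup>2 / 2)"
proof -
  have "(1 / sqrt (2 * pi)) * exp (- t\<^sup>2 / 2) \<le> 1 * exp (- t\<^sup>2 / 2)"
    by (rule mult_right_mono) (auto simp: inv_sqrt2pi_le1)
  then show ?thesis by (metis phi_eq mult_1)
qed

lemma phi_exp_bound: "std_normal_density t * exp (L * \<bar>t\<bar>) \<le> exp (L\<^sup>2) * exp (- t\<^sup>2 / 4)"
proof -
  have "std_normal_density t * exp (L * \<bar>t\<bar>) \<le> exp (- t\<^sup>2 / 2) * exp (L * \<bar>t\<bar>)"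
    by (rule mult_right_mono[OF phi_le_exp]) simp
  also have "\<dots> = exp (- t\<^sup>2 / 2 + L * \<bar>t\<bar>)" by (simp only: exp_add)
  also have "\<dots> \<le> exp (L\<^sup>2) * exp (- t\<^sup>2 / 4)" by (rule exp_bound1)
  finally show ?thesis .
qed

lemma translate_int:
  fixes k :: "real \<Rightarrow> real"
  assumes "integrable lborel k"
  shows "integrable lborel (\<lambda>\<mu>. k (x - \<mu>))" and "(LINT \<mu>|lborel. k (x - \<mu>)) = integral\<^sup>L lborel k"
proof -
  have e: "(\<lambda>\<mu>. k (x - \<mu>)) = (\<lambda>\<mu>. k (x + (-1) * \<mu>))" by simp
  show "integrable lborel (\<lambda>\<mu>. k (x - \<mu>))" unfolding e
    by (rule lborel_integrable_real_affine[OF assms]) simp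
  show "(LINT \<mu>|lborel. k (x - \<mu>)) = integral\<^sup>L lborel k"
    using lborel_integral_real_affine[of "-1" k x] unfolding e by simp
qed

lemma shift_int:
  fixes g :: "real \<Rightarrow> real"
  assumes "integrable lborel g"
  shows "integrable lborel (\<lambda>\<mu>. g (\<mu> - c))"
proof -
  have e: "(\<lambda>\<mu>. g (\<mu> - c)) = (\<lambda>\<mu>. g (- c + 1 * \<mu>))" by simp
  have "integrable lborel (\<lambda>\<mu>. g (- c + 1 * \<mu>))" by (rule lborel_integrable_real_affine[OF assms]) simp
  then show ?thesis unfolding e .
qed

theorem mainTheorem9:
  fixes \<gamma>0 :: "real \<Rightarrow> real" and \<Lambda> :: real
  assumes meas: "\<gamma>0 \<in> borel_measurable lborel"
    and pos: "\<And>u. \<gamma>0 u > 0"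
    and integ: "integrable lborel \<gamma>0"
    and total: "(LINT u|lborel. \<gamma>0 u) = 1"
    and symm: "\<And>u. \<gamma>0 (- u) = \<gamma>0 u"
    and unimodal_left: "mono_on {..0} \<gamma>0"
    and unimodal_right: "antimono_on {0..} \<gamma>0"
    and \<Lambda>_pos: "\<Lambda> > 0"
    and loglip: "\<And>u v. \<bar>ln (\<gamma>0 u) - ln (\<gamma>0 v)\<bar> \<le> \<Lambda> * \<bar>u - v\<bar>"
  shows "\<exists>C>0. \<forall>x w c. 0 < w \<and> w \<le> 1 \<longrightarrow>
           \<bar>zeta \<gamma>0 w c x - x\<bar> \<le> C * (1 + sqrt (\<bar>c\<bar> + ln (1 / w)))"
proof -
  have [measurable]: "\<gamma>0 \<in> borel_measurable borel" using meas by simp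
  define k1 where "k1 t = exp (\<Lambda>\<^sup>2) * (\<bar>t\<bar> * exp (- t\<^sup>2 / 4))" for t :: real
  define k2 where "k2 t = std_normal_density t * exp (- (\<Lambda> * \<bar>t\<bar>))" for t :: real
  have k1_int: "integrable lborel k1" unfolding k1_def using int_absexp4 by simp
  have [measurable]: "k1 \<in> borel_measurable borel" using borel_measurable_integrable[OF k1_int] by simp
  have k2pt: "norm (k2 t) \<le> norm (std_normal_density t)" for t :: real
  proof -
    have "std_normal_density t * exp (- (\<Lambda> * \<bar>t\<bar>)) \<le> std_normal_density t * 1"
      using \<Lambda>_pos by (intro mult_left_mono) auto
    then show ?thesis unfolding k2_def by simp
  qed
  have k2_int: "integrable lborel k2"
    apply (rule Bochner_Integration.integrable_bound[where f = "std_normal_density"])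
    apply simp
    apply (unfold k2_def, measurable)[1]
    apply (rule AE_I2)
    apply (rule k2pt)
    done
  have [measurable]: "k2 \<in> borel_measurable borel" using borel_measurable_integrable[OF k2_int] by simp
  define K1 where "K1 = integral\<^sup>L lborel k1"
  define K2 where "K2 = integral\<^sup>L lborel k2"
  have K2pos: "K2 > 0" unfolding K2_def
    by (rule pos_integral_pos[OF k2_int]) (simp add: k2_def normal_density_pos)
  have K1nn: "K1 \<ge> 0" unfolding K1_def k1_def by (rule Bochner_Integration.integral_nonneg) simp
  define g0 where "g0 = \<gamma>0 0"
  have g0pos: "g0 > 0" unfolding g0_def using pos by simp
  define B where "B = K1 / K2"
  define K where "K = K2 * g0"
  define M where "M = max 1 \<Lambda>"
  define C where "C = 4 * \<Lambda> + sqrt (8 * M) + 1 / K + B + 1"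
  have B0: "B \<ge> 0" unfolding B_def using K1nn K2pos by simp
  have K0: "K > 0" unfolding K_def using K2pos g0pos by simp
  have Cpos: "C > 0"
  proof -
    have "0 \<le> sqrt (8 * M)" unfolding M_def by simp
    moreover have "0 < 1 / K" using K0 by simp
    ultimately show ?thesis unfolding C_def using \<Lambda>_pos B0 by linarith
  qed
  have key: "\<bar>zeta \<gamma>0 w c x - x\<bar> \<le> C * (1 + sqrt (\<bar>c\<bar> + ln (1 / w)))"
    if w0: "0 < w" and w1: "w \<le> 1" for x w c
  proof -
    define h where "h \<mu> = \<gamma>0 (\<mu> - c)" for \<mu>
    have h_int: "integrable lborel h" unfolding h_def by (rule shift_int[OF integ])
    have [measurable]: "h \<in> borel_measurable borel" unfolding h_def by measurable
    define G where "G = gconv \<gamma>0 c x"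
    define G' where "G' = (LINT \<mu>|lborel. - (x - \<mu>) * std_normal_density (x - \<mu>) * h \<mu>)"
    have Gfun: "gconv \<gamma>0 c = (\<lambda>x. LINT \<mu>|lborel. std_normal_density (x - \<mu>) * h \<mu>)"
      by (rule ext) (simp add: gconv_def h_def)
    have dG: "(gconv \<gamma>0 c has_real_derivative G') (at x)"
      unfolding Gfun G'_def by (rule conv_deriv[OF h_int])
    have mfun: "marg \<gamma>0 w c = (\<lambda>y. (1 - w) * std_normal_density y + w * gconv \<gamma>0 c y)"
      by (rule ext) (simp add: marg_def)
    have dm: "(marg \<gamma>0 w c has_real_derivative (1 - w) * (- x * std_normal_density x) + w * G') (at x)"
      unfolding mfun by (intro DERIV_add DERIV_cmult phi_deriv dG)
    have Glow1: "\<gamma>0 (x - c) * K2 \<le> G"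
    proof -
      have "\<gamma>0 (x - c) * K2 = (LINT \<mu>|lborel. \<gamma>0 (x - c) * k2 (x - \<mu>))"
        unfolding K2_def translate_int(2)[OF k2_int, of x, symmetric] by simp
      also have "\<dots> \<le> (LINT \<mu>|lborel. std_normal_density (x - \<mu>) * h \<mu>)"
      proof (rule integral_mono)
        show "integrable lborel (\<lambda>\<mu>. \<gamma>0 (x - c) * k2 (x - \<mu>))"
          using translate_int(1)[OF k2_int, of x] by simp
        show "integrable lborel (\<lambda>\<mu>. std_normal_density (x - \<mu>) * h \<mu>)"
          by (rule conv_integrable[OF h_int])
        fix \<mu> :: real
        have "\<gamma>0 (x - c) * exp (- (\<Lambda> * \<bar>(\<mu> - c) - (x - c)\<bar>)) \<le> \<gamma>0 (\<mu> - c)"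
          by (rule loglip_exp(2)[OF pos loglip])
        moreover have "\<bar>(\<mu> - c) - (x - c)\<bar> = \<bar>x - \<mu>\<bar>" by simp
        ultimately have "\<gamma>0 (x - c) * exp (- (\<Lambda> * \<bar>x - \<mu>\<bar>)) \<le> h \<mu>" unfolding h_def by simp
        then have "std_normal_density (x - \<mu>) * (\<gamma>0 (x - c) * exp (- (\<Lambda> * \<bar>x - \<mu>\<bar>))) \<le> std_normal_density (x - \<mu>) * h \<mu>"
          by (rule mult_left_mono) simp
        then show "\<gamma>0 (x - c) * k2 (x - \<mu>) \<le> std_normal_density (x - \<mu>) * h \<mu>"
          unfolding k2_def by (simp add: mult_ac)
      qed
      also have "\<dots> = G" unfolding G_def Gfun ..
      finally show ?thesis .
    qed
    have Gpos: "G > 0" using Glow1 pos[of "x - c"] K2pos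
      by (smt (verit) mult_pos_pos)
    have G'bound: "\<bar>G'\<bar> \<le> \<gamma>0 (x - c) * K1"
    proof -
      have i2: "integrable lborel (\<lambda>\<mu>. \<gamma>0 (x - c) * k1 (x - \<mu>))"
        using translate_int(1)[OF k1_int, of x] by simp
      have pt: "\<bar>- (x - \<mu>) * std_normal_density (x - \<mu>) * h \<mu>\<bar> \<le> \<gamma>0 (x - c) * k1 (x - \<mu>)" for \<mu>
      proof -
        have "h \<mu> \<le> \<gamma>0 (x - c) * exp (\<Lambda> * \<bar>(\<mu> - c) - (x - c)\<bar>)"
          unfolding h_def by (rule loglip_exp(1)[OF pos loglip])
        then have hb: "h \<mu> \<le> \<gamma>0 (x - c) * exp (\<Lambda> * \<bar>x - \<mu>\<bar>)" by (simp add: abs_minus_commute)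
        have hp: "h \<mu> > 0" unfolding h_def using pos by simp
        have "\<bar>- (x - \<mu>) * std_normal_density (x - \<mu>) * h \<mu>\<bar> = \<bar>x - \<mu>\<bar> * std_normal_density (x - \<mu>) * h \<mu>"
          using hp by (simp add: abs_mult abs_minus_commute)
        also have "\<dots> \<le> \<bar>x - \<mu>\<bar> * std_normal_density (x - \<mu>) * (\<gamma>0 (x - c) * exp (\<Lambda> * \<bar>x - \<mu>\<bar>))"
          by (rule mult_left_mono[OF hb]) simp
        also have "\<dots> = \<gamma>0 (x - c) * (\<bar>x - \<mu>\<bar> * (std_normal_density (x - \<mu>) * exp (\<Lambda> * \<bar>x - \<mu>\<bar>)))"
          by (simp add: mult_ac)
        also have "\<dots> \<le> \<gamma>0 (x - c) * (\<bar>x - \<mu>\<bar> * (exp (\<Lambda>\<^sup>2) * exp (- (x - \<mu>)\<^sup>2 / 4)))"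
          using pos[of "x - c"] by (intro mult_left_mono phi_exp_bound) auto
        also have "\<dots> = \<gamma>0 (x - c) * k1 (x - \<mu>)" unfolding k1_def by (simp add: mult_ac)
        finally show ?thesis .
      qed
      have i1: "integrable lborel (\<lambda>\<mu>. - (x - \<mu>) * std_normal_density (x - \<mu>) * h \<mu>)"
      proof (rule Bochner_Integration.integrable_bound[OF i2])
        show "(\<lambda>\<mu>. - (x - \<mu>) * std_normal_density (x - \<mu>) * h \<mu>) \<in> borel_measurable lborel" by measurable
        show "AE \<mu> in lborel. norm (- (x - \<mu>) * std_normal_density (x - \<mu>) * h \<mu>) \<le> norm (\<gamma>0 (x - c) * k1 (x - \<mu>))"
          using pt by (intro AE_I2) (smt (verit) real_norm_def)
      qed
      have "\<bar>G'\<bar> \<le> (LINT \<mu>|lborel. \<gamma>0 (x - c) * k1 (x - \<mu>))"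
        unfolding G'_def by (rule integral_abs_bound_integral[OF i1 i2 pt])
      also have "\<dots> = \<gamma>0 (x - c) * K1"
        unfolding K1_def translate_int(2)[OF k1_int, of x, symmetric] by simp
      finally show ?thesis .
    qed
    have G'B: "\<bar>G'\<bar> \<le> B * G"
    proof -
      have "\<gamma>0 (x - c) * K1 = B * (\<gamma>0 (x - c) * K2)" unfolding B_def using K2pos by simp
      also have "\<dots> \<le> B * G" using Glow1 B0 by (intro mult_left_mono) auto
      finally show ?thesis using G'bound by simp
    qed
    have Glow: "K * exp (- (\<Lambda> * \<bar>x\<bar>) - \<Lambda> * \<bar>c\<bar>) \<le> G"
    proof -
      have "g0 * exp (- (\<Lambda> * \<bar>(x - c) - 0\<bar>)) \<le> \<gamma>0 (x - c)"
        unfolding g0_def by (rule loglip_exp(2)[OF pos loglip])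
      moreover have "exp (- (\<Lambda> * \<bar>x\<bar>) - \<Lambda> * \<bar>c\<bar>) \<le> exp (- (\<Lambda> * \<bar>(x - c) - 0\<bar>))"
      proof -
        have "\<bar>x - c\<bar> \<le> \<bar>x\<bar> + \<bar>c\<bar>" by (rule abs_triangle_ineq4)
        then have "\<Lambda> * \<bar>x - c\<bar> \<le> \<Lambda> * (\<bar>x\<bar> + \<bar>c\<bar>)" using \<Lambda>_pos by (intro mult_left_mono) auto
        then show ?thesis by (simp add: algebra_simps)
      qed
      ultimately have "g0 * exp (- (\<Lambda> * \<bar>x\<bar>) - \<Lambda> * \<bar>c\<bar>) \<le> \<gamma>0 (x - c)"
        using g0pos by (smt (verit) mult_left_mono)
      then have "K2 * (g0 * exp (- (\<Lambda> * \<bar>x\<bar>) - \<Lambda> * \<bar>c\<bar>)) \<le> K2 * \<gamma>0 (x - c)"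
        using K2pos by (intro mult_left_mono) auto
      then show ?thesis using Glow1 unfolding K_def by (simp add: mult_ac)
    qed
    have mG: "marg \<gamma>0 w c x = (1 - w) * std_normal_density x + w * G"
      unfolding marg_def G_def ..
    have mpos: "marg \<gamma>0 w c x > 0" unfolding mG
      using w0 w1 Gpos normal_density_pos[of 1 0 x]
      by (smt (verit) mult_nonneg_nonneg mult_pos_pos)
    have dl: "((\<lambda>y. ln (marg \<gamma>0 w c y)) has_real_derivative
               (1 / marg \<gamma>0 w c x) * ((1 - w) * (- x * std_normal_density x) + w * G')) (at x)"
      by (rule DERIV_chain2[OF DERIV_ln_divide[OF mpos] dm])
    have zeq: "zeta \<gamma>0 w c x - x = ((1 - w) * (- x * std_normal_density x) + w * G') / ((1 - w) * std_normal_density x + w * G)"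
      unfolding zeta_def DERIV_imp_deriv[OF dl] mG by simp
    have fb: "\<bar>zeta \<gamma>0 w c x - x\<bar> \<le> 4 * \<Lambda> + sqrt (8 * M) * sqrt (\<bar>c\<bar> + ln (1 / w)) + 1 / K + B"
      unfolding zeq
      by (rule final_bound[OF w0 w1 normal_density_pos phi_le_exp Gpos G'B B0 K0 Glow \<Lambda>_pos M_def]) simp
    have s0: "0 \<le> sqrt (\<bar>c\<bar> + ln (1 / w))" using w0 w1 by simp
    have "4 * \<Lambda> + sqrt (8 * M) * sqrt (\<bar>c\<bar> + ln (1 / w)) + 1 / K + B
          \<le> C * 1 + C * sqrt (\<bar>c\<bar> + ln (1 / w))"
    proof -
      have "sqrt (8 * M) * sqrt (\<bar>c\<bar> + ln (1 / w)) \<le> C * sqrt (\<bar>c\<bar> + ln (1 / w))"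
        using s0 \<Lambda>_pos K0 B0 by (intro mult_right_mono) (auto simp: C_def)
      moreover have "4 * \<Lambda> + 1 / K + B \<le> C * 1" unfolding C_def using M_def by simp
      ultimately show ?thesis by linarith
    qed
    then show ?thesis using fb by (simp add: distrib_left)
  qed
  show ?thesis using Cpos key by blast
qed

end
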